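(* For every $N\ge1$ and every pair of disjoint nonempty subsets $\mathscr A,\mathscr B$ of $E_N$, $$\mathrm{Cap}^s_N(\mathscr A,\mathscr B)\le\mathrm{Cap}_N(\mathscr A,\mathscr B)\le 4L^2\,\mathrm{Cap}^s_N(\mathscr A,\mathscr B).$$
   Context: Fix an integer $L\ge2$, $\mathbb T_L=\mathbb Z/L\mathbb Z$, $\alpha>0$, $a(0)=1$, $a(n)=n^\alpha$ ($n\ge1$), $g(0)=0$, $g(n)=a(n)/a(n-1)$ ($n\ge1$). $E_N=\{\eta\in\{0,1,\dots\}^{\mathbb T_L}:\sum_x\eta_x=N\}$; $\sigma^{x,y}\eta$ moves one particle from $x$ to $y$. Generator $(\mathcal LF)(\eta)=\sum_xg(\eta_x)[F(\sigma^{x,x+1}\eta)-F(\eta)]$; invariant measure $\mu_N(\eta)=W_N^{-1}\prod_xa(\eta_x)^{-1}$, $W_N=\sum_{\zeta\in E_N}\prod_xa(\zeta_x)^{-1}$. Dirichlet form $D_N(F)=\frac12\sum_x\sum_{\eta\in E_N}\mu_N(\eta)g(\eta_x)[F(\sigma^{x,x+1}\eta)-F(\eta)]^2$. For disjoint nonempty $\mathscr A,\mathscr B\subset E_N$: $V_{\mathscr A,\mathscr B}$ is the function equal to $1$ on $\mathscr A$, $0$ on $\mathscr B$, and $V(\eta)=\mathbf P_\eta[H_{\mathscr A}<H_{\mathscr B}]$ elsewhere (the unique function with these boundary values with $\mathcal LV=0$ off $\mathscr A\cup\mathscr B$); $\mathrm{Cap}_N(\mathscr A,\mathscr B)=D_N(V_{\mathscr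 A,\mathscr B})$. The symmetric capacity is $\mathrm{Cap}^s_N(\mathscr A,\mathscr B)=\inf\{D_N(F):F|_{\mathscr A}=1,\ F|_{\mathscr B}=0\}$ (capacity of the reversible process with generator $(\mathcal L+\mathcal L^* )/2$, $\mathcal L^*$ the $L^2(\mu_N)$-adjoint of $\mathcal L$). *)

theory Defs
  imports Complex_Main
begin

text \<open>Sites of the torus T_L are 0..<L; configurations are eta :: nat => nat
  vanishing outside {0..<L}.\<close>

definition zrp_a :: "real \<Rightarrow> nat \<Rightarrow> real" where
  "zrp_a \<alpha> n = (if n = 0 then 1 else real n powr \<alpha>)"

definition zrp_g :: "real \<Rightarrow> nat \<Rightarrow> real" where
  "zrp_g \<alpha> n = (if n = 0 then 0 else zrp_a \<alpha> n / zrp_a \<alpha> (n - 1))"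

definition config_space :: "nat \<Rightarrow> nat \<Rightarrow> (nat \<Rightarrow> nat) set" where
  "config_space L N = {\<eta>. (\<forall>x. x \<ge> L \<longrightarrow> \<eta> x = 0) \<and> (\<Sum>x<L. \<eta> x) = N}"

text \<open>move one particle from x to y (only used when eta x >= 1)\<close>
definition sigma :: "nat \<Rightarrow> nat \<Rightarrow> (nat \<Rightarrow> nat) \<Rightarrow> (nat \<Rightarrow> nat)" where
  "sigma x y \<eta> = (\<eta>(x := \<eta> x - 1))(y := (\<eta>(x := \<eta> x - 1)) y + 1)"

definition next_site :: "nat \<Rightarrow> nat \<Rightarrow> nat" where
  "next_site L x = (x + 1) mod L"

definition weight :: "nat \<Rightarrow> real \<Rightarrow> (nat \<Rightarrow> nat) \<Rightarrow> real" where
  "weight L \<alpha> \<eta> = (\<Prod>x<L. 1 / zrp_a \<alpha> (\<eta> x))"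

definition partition_fn :: "nat \<Rightarrow> real \<Rightarrow> nat \<Rightarrow> real" where
  "partition_fn L \<alpha> N = (\<Sum>\<zeta>\<in>config_space L N. weight L \<alpha> \<zeta>)"

definition mu :: "nat \<Rightarrow> real \<Rightarrow> nat \<Rightarrow> (nat \<Rightarrow> nat) \<Rightarrow> real" where
  "mu L \<alpha> N \<eta> = weight L \<alpha> \<eta> / partition_fn L \<alpha> N"

definition generator :: "nat \<Rightarrow> real \<Rightarrow> ((nat \<Rightarrow> nat) \<Rightarrow> real) \<Rightarrow> (nat \<Rightarrow> nat) \<Rightarrow> real" where
  "generator L \<alpha> F \<eta> =
     (\<Sum>x<L. zrp_g \<alpha> (\<eta> x) * (F (sigma x (next_site L x) \<eta>) - F \<eta>))"

definition dirichlet :: "nat \<Rightarrow> real \<Rightarrow> nat \<Rightarrow> ((nat \<Rightarrow> nat) \<Rightarrow> real) \<Rightarrow> real" where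
  "dirichlet L \<alpha> N F = (1/2) * (\<Sum>x<L. \<Sum>\<eta>\<in>config_space L N.
      mu L \<alpha> N \<eta> * zrp_g \<alpha> (\<eta> x) * (F (sigma x (next_site L x) \<eta>) - F \<eta>)^2)"

definition eq_potential :: "nat \<Rightarrow> real \<Rightarrow> nat \<Rightarrow> (nat \<Rightarrow> nat) set \<Rightarrow> (nat \<Rightarrow> nat) set
    \<Rightarrow> ((nat \<Rightarrow> nat) \<Rightarrow> real)" where
  "eq_potential L \<alpha> N A B = (THE F.
      (\<forall>\<eta>. \<eta> \<notin> config_space L N \<longrightarrow> F \<eta> = 0) \<and>
      (\<forall>\<eta>\<in>A. F \<eta> = 1) \<and> (\<forall>\<eta>\<in>B. F \<eta> = 0) \<and>
      (\<forall>\<eta>\<in>config_space L N - (A \<union> B). generator L \<alpha> F \<eta> = 0))"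

definition capacity :: "nat \<Rightarrow> real \<Rightarrow> nat \<Rightarrow> (nat \<Rightarrow> nat) set \<Rightarrow> (nat \<Rightarrow> nat) set \<Rightarrow> real" where
  "capacity L \<alpha> N A B = dirichlet L \<alpha> N (eq_potential L \<alpha> N A B)"

definition sym_capacity :: "nat \<Rightarrow> real \<Rightarrow> nat \<Rightarrow> (nat \<Rightarrow> nat) set \<Rightarrow> (nat \<Rightarrow> nat) set \<Rightarrow> real" where
  "sym_capacity L \<alpha> N A B = Inf {dirichlet L \<alpha> N F | F.
      (\<forall>\<eta>\<in>A. F \<eta> = 1) \<and> (\<forall>\<eta>\<in>B. F \<eta> = 0)}"

end

theory Submission
  imports Defs
begin

lemma sigma_count:
  assumes "\<eta> x \<ge> 1"
  shows "sigma x y \<eta> z + (if z = x then 1 else 0) = \<eta> z + (if z = y then 1 else 0)"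
  using assms by (auto simp: sigma_def)

lemma sigma_comp:
  assumes "\<eta> x \<ge> 1"
  shows "sigma y z (sigma x y \<eta>) = sigma x z \<eta>"
  using assms by (auto simp: sigma_def fun_eq_iff)

lemma sigma_self:
  assumes "\<eta> x \<ge> 1"
  shows "sigma x x \<eta> = \<eta>"
  using assms by (auto simp: sigma_def fun_eq_iff)

lemma sigma_pos: "\<eta> x \<ge> 1 \<Longrightarrow> sigma x y \<eta> y \<ge> 1"
  by (auto simp: sigma_def)

lemma sigma_in:
  assumes "\<eta> \<in> config_space L N" "x < L" "y < L" "\<eta> x \<ge> 1"
  shows "sigma x y \<eta> \<in> config_space L N"
proof -
  have "(\<Sum>z<L. sigma x y \<eta> z + (if z = x then 1 else 0)) = (\<Sum>z<L. \<eta> z + (if z = y then 1 else 0))"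
    using sigma_count[of \<eta> x y, OF assms(4)] by simp
  hence "(\<Sum>z<L. sigma x y \<eta> z) + 1 = (\<Sum>z<L. \<eta> z) + 1"
    using assms(2,3) by (simp add: sum.distrib)
  moreover have "\<forall>z. z \<ge> L \<longrightarrow> sigma x y \<eta> z = 0"
    using assms unfolding config_space_def sigma_def by auto
  ultimately show ?thesis using assms(1) unfolding config_space_def by auto
qed

lemma a_pos: "zrp_a \<alpha> n > 0"
  by (auto simp: zrp_a_def)

lemma g_nonneg: "zrp_g \<alpha> n \<ge> 0"
  using a_pos[of \<alpha> n] a_pos[of \<alpha> "n-1"] by (auto simp: zrp_g_def)

lemma g_pos: "n \<ge> 1 \<Longrightarrow> zrp_g \<alpha> n > 0"
  using a_pos[of \<alpha> n] a_pos[of \<alpha> "n-1"] by (auto simp: zrp_g_def)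

lemma g_zero: "zrp_g \<alpha> 0 = 0"
  by (simp add: zrp_g_def)

lemma next_lt: "L > 0 \<Longrightarrow> next_site L x < L"
  by (simp add: next_site_def)

lemma finite_E: "finite (config_space L N)"
proof -
  have "config_space L N \<subseteq> {f. \<forall>x. (x \<in> {..<L} \<longrightarrow> f x \<in> {..N}) \<and> (x \<notin> {..<L} \<longrightarrow> f x = 0)}"
  proof
    fix \<eta> assume h: "\<eta> \<in> config_space L N"
    have "\<eta> x \<le> N" if "x < L" for x
    proof -
      have "\<eta> x \<le> (\<Sum>z<L. \<eta> z)" using that by (intro member_le_sum) auto
      thus ?thesis using h by (simp add: config_space_def)
    qed
    thus "\<eta> \<in> {f. \<forall>x. (x \<in> {..<L} \<longrightarrow> f x \<in> {..N}) \<and> (x \<notin> {..<L} \<longrightarrow> f x = 0)}"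
      using h by (auto simp: config_space_def)
  qed
  thus ?thesis by (rule finite_subset) (intro finite_set_of_finite_funs, auto)
qed


definition moves :: "nat \<Rightarrow> nat \<Rightarrow> ((nat \<Rightarrow> nat) \<times> (nat \<Rightarrow> nat)) set" where
  "moves L N = {(\<eta>, sigma x (next_site L x) \<eta>) | \<eta> x. \<eta> \<in> config_space L N \<and> x < L \<and> \<eta> x \<ge> 1}"

lemma next_mod: "next_site L ((a::nat) mod L) = (Suc a) mod L"
  by (simp add: next_site_def mod_Suc_eq)

lemma path_k:
  assumes "\<eta> \<in> config_space L N" "x < L" "1 \<le> \<eta> x"
  shows "(sigma x ((x+1) mod L) \<eta>, sigma x ((x + Suc k) mod L) \<eta>) \<in> (moves L N)\<^sup>*"
proof (induction k)
  case 0 thus ?case by simp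
next
  case (Suc k)
  define y where "y = (x + Suc k) mod L"
  have L: "L > 0" using assms(2) by simp
  have yL: "y < L" using L by (simp add: y_def)
  let ?\<xi> = "sigma x y \<eta>"
  have xi: "?\<xi> \<in> config_space L N" using sigma_in[OF assms(1,2) yL assms(3)] .
  have "(?\<xi>, sigma y (next_site L y) ?\<xi>) \<in> moves L N"
    unfolding moves_def using xi yL sigma_pos[of \<eta> x y, OF assms(3)] by blast
  moreover have "sigma y (next_site L y) ?\<xi> = sigma x ((x + Suc (Suc k)) mod L) \<eta>"
    using sigma_comp[of \<eta> x y, OF assms(3)] by (simp add: y_def next_mod)
  ultimately show ?case using Suc.IH by (simp add: y_def)
qed

lemma move_rev:
  assumes "(\<eta>, \<zeta>) \<in> moves L N"
  shows "(\<zeta>, \<eta>) \<in> (moves L N)\<^sup>*"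
proof -
  obtain x where h: "\<eta> \<in> config_space L N" "x < L" "1 \<le> \<eta> x" "\<zeta> = sigma x (next_site L x) \<eta>"
    using assms unfolding moves_def by blast
  have "(sigma x ((x+1) mod L) \<eta>, sigma x ((x + Suc (L - 1)) mod L) \<eta>) \<in> (moves L N)\<^sup>*"
    by (rule path_k[OF h(1-3)])
  moreover have "(x + Suc (L - 1)) mod L = x" using h(2) by simp
  ultimately show ?thesis using h sigma_self[of \<eta> x] by (simp add: next_site_def)
qed

lemma moves_sym:
  assumes "(a, b) \<in> (moves L N)\<^sup>*"
  shows "(b, a) \<in> (moves L N)\<^sup>*"
  using assms
proof (induction rule: rtrancl_induct)
  case base thus ?case by simp
next
  case (step y z)
  thus ?case using move_rev[OF step(2)] by (meson rtrancl_trans)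
qed

definition cfg :: "nat \<Rightarrow> nat \<Rightarrow> nat \<Rightarrow> nat" where
  "cfg L N = (\<lambda>i. if i = L - 1 then N else 0)"

definition phi :: "nat \<Rightarrow> (nat \<Rightarrow> nat) \<Rightarrow> nat" where
  "phi L \<eta> = (\<Sum>w<L. \<eta> w * (L - 1 - w))"

lemma sum_ind_add:
  fixes f c :: "nat \<Rightarrow> nat"
  assumes "z < L"
  shows "(\<Sum>w<L. (f w + (if w = z then 1 else 0)) * c w) = (\<Sum>w<L. f w * c w) + c z"
proof -
  have "(\<Sum>w<L. (f w + (if w = z then 1 else 0)) * c w) = (\<Sum>w<L. f w * c w + (if w = z then c w else 0))"
    by (rule sum.cong) auto
  also have "\<dots> = (\<Sum>w<L. f w * c w) + (\<Sum>w<L. if w = z then c w else 0)"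
    by (rule sum.distrib)
  finally show ?thesis using assms by simp
qed

lemma phi_dec:
  assumes "\<eta> z \<ge> 1" "z < L - 1"
  shows "phi L (sigma z (Suc z) \<eta>) < phi L \<eta>"
proof -
  have "(\<Sum>w<L. (sigma z (Suc z) \<eta> w + (if w = z then 1 else 0)) * (L - 1 - w))
      = (\<Sum>w<L. (\<eta> w + (if w = Suc z then 1 else 0)) * (L - 1 - w))"
    using sigma_count[of \<eta> z "Suc z", OF assms(1)] by simp
  hence "phi L (sigma z (Suc z) \<eta>) + (L - 1 - z) = phi L \<eta> + (L - 1 - Suc z)"
    using assms(2) unfolding phi_def
    by (subst (asm) sum_ind_add, simp, subst (asm) sum_ind_add, simp, simp)
  thus ?thesis using assms(2) by linarith
qed

lemma to_cfg:
  assumes "\<eta> \<in> config_space L N" "L \<ge> 1"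
  shows "(\<eta>, cfg L N) \<in> (moves L N)\<^sup>*"
  using assms(1)
proof (induction "phi L \<eta>" arbitrary: \<eta> rule: less_induct)
  case less
  show ?case
  proof (cases "\<exists>z. z < L - 1 \<and> \<eta> z \<ge> 1")
    case True
    then obtain z where z: "z < L - 1" "\<eta> z \<ge> 1" by blast
    have nz: "next_site L z = Suc z" using z(1) by (simp add: next_site_def)
    have "(\<eta>, sigma z (next_site L z) \<eta>) \<in> moves L N"
      unfolding moves_def using less.prems z by auto
    hence "(\<eta>, sigma z (Suc z) \<eta>) \<in> moves L N" using nz by simp
    moreover have "sigma z (Suc z) \<eta> \<in> config_space L N"
      using sigma_in[OF less.prems] z by simp
    moreover have "(sigma z (Suc z) \<eta>, cfg L N) \<in> (moves L N)\<^sup>*"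
      using less.hyps[OF phi_dec[of \<eta> z L, OF z(2) z(1)]] calculation(2) by blast
    ultimately show ?thesis by (meson converse_rtrancl_into_rtrancl)
  next
    case False
    have "\<eta> = cfg L N"
    proof
      fix w
      show "\<eta> w = cfg L N w"
      proof (cases "w = L - 1")
        case True
        have "N = (\<Sum>z<L. \<eta> z)" using less.prems by (simp add: config_space_def)
        also have "\<dots> = (\<Sum>z<L. if z = L - 1 then \<eta> z else 0)"
        proof (rule sum.cong)
          fix z assume "z \<in> {..<L}"
          hence "z < L" by simp
          show "\<eta> z = (if z = L - 1 then \<eta> z else 0)"
          proof (cases "z = L - 1")
            case False
            hence "z < L - 1" using \<open>z < L\<close> by linarith
            hence "\<not> \<eta> z \<ge> 1" using \<open>\<not> (\<exists>z. z < L - 1 \<and> \<eta> z \<ge> 1)\<close> by blast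
            thus ?thesis by simp
          qed simp
        qed simp
        also have "\<dots> = \<eta> (L - 1)" using assms(2) by simp
        finally show ?thesis using True by (simp add: cfg_def)
      next
        case F: False
        have "\<eta> w = 0"
        proof (cases "w < L")
          case True
          hence "w < L - 1" using F by linarith
          hence "\<not> \<eta> w \<ge> 1" using False by blast
          thus ?thesis by simp
        next
          case False thus ?thesis using less.prems by (simp add: config_space_def)
        qed
        thus ?thesis using F by (simp add: cfg_def)
      qed
    qed
    thus ?thesis by simp
  qed
qed

lemma irred:
  assumes "\<eta> \<in> config_space L N" "\<zeta> \<in> config_space L N" "L \<ge> 1"
  shows "(\<eta>, \<zeta>) \<in> (moves L N)\<^sup>*"
  using to_cfg[OF assms(1,3)] moves_sym[OF to_cfg[OF assms(2,3)]] by (meson rtrancl_trans)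


lemma max_principle:
  fixes D :: "(nat \<Rightarrow> nat) \<Rightarrow> real"
  assumes L: "L \<ge> 1" and AE: "A \<subseteq> config_space L N" and Ane: "A \<noteq> {}"
    and DA: "\<forall>\<eta>\<in>A. D \<eta> = 0" and DB: "\<forall>\<eta>\<in>B. D \<eta> = 0"
    and harm: "\<forall>\<eta>\<in>config_space L N - (A \<union> B).
        (\<Sum>x<L. zrp_g \<alpha> (\<eta> x) * (D (sigma x (next_site L x) \<eta>) - D \<eta>)) = 0"
    and \<eta>E: "\<eta> \<in> config_space L N"
  shows "D \<eta> \<le> 0"
proof (rule ccontr)
  assume "\<not> D \<eta> \<le> 0"
  let ?E = "config_space L N"
  define M where "M = Max (D ` ?E)"
  have fin: "finite (D ` ?E)" using finite_E by simp
  have le: "D \<zeta> \<le> M" if "\<zeta> \<in> ?E" for \<zeta> unfolding M_def using fin that by simp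
  have "M \<in> D ` ?E" unfolding M_def using fin \<eta>E by (intro Max_in) auto
  then obtain \<eta>0 where \<eta>0: "\<eta>0 \<in> ?E" "D \<eta>0 = M" by auto
  have Mpos: "M > 0" using le[OF \<eta>E] \<open>\<not> D \<eta> \<le> 0\<close> by simp
  have reach: "D \<zeta> = M" if "(\<eta>0, \<zeta>) \<in> (moves L N)\<^sup>*" for \<zeta>
    using that
  proof (induction rule: rtrancl_induct)
    case base thus ?case using \<eta>0 by simp
  next
    case (step y z)
    obtain x where h: "y \<in> ?E" "x < L" "1 \<le> y x" "z = sigma x (next_site L x) y"
      using step(2) unfolding moves_def by blast
    have Lp: "L > 0" using L by simp
    have nAB: "y \<notin> A \<union> B" using DA DB step(3) Mpos by auto
    have terms: "\<forall>x'\<in>{..<L}. 0 \<le> - (zrp_g \<alpha> (y x') * (D (sigma x' (next_site L x') y) - D y))"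
    proof
      fix x' assume "x' \<in> {..<L}"
      show "0 \<le> - (zrp_g \<alpha> (y x') * (D (sigma x' (next_site L x') y) - D y))"
      proof (cases "y x' \<ge> 1")
        case True
        have "sigma x' (next_site L x') y \<in> ?E"
          using sigma_in[OF h(1) _ next_lt[OF Lp] True] \<open>x' \<in> {..<L}\<close> by simp
        hence "D (sigma x' (next_site L x') y) - D y \<le> 0" using le step(3) by simp
        thus ?thesis using g_nonneg[of \<alpha> "y x'"] by (simp add: mult_nonneg_nonpos)
      next
        case False hence "y x' = 0" by simp
        thus ?thesis by (simp add: g_zero)
      qed
    qed
    have "(\<Sum>x'<L. - (zrp_g \<alpha> (y x') * (D (sigma x' (next_site L x') y) - D y))) = 0"
    proof -
      have "y \<in> ?E - (A \<union> B)" using h(1) nAB by blast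
      hence "(\<Sum>x'<L. zrp_g \<alpha> (y x') * (D (sigma x' (next_site L x') y) - D y)) = 0"
        using harm by blast
      thus ?thesis by (simp add: sum_negf)
    qed
    hence "\<forall>x'\<in>{..<L}. - (zrp_g \<alpha> (y x') * (D (sigma x' (next_site L x') y) - D y)) = 0"
      using terms by (subst (asm) sum_nonneg_eq_0_iff) auto
    hence "zrp_g \<alpha> (y x) * (D z - D y) = 0" using h by simp
    thus ?case using g_pos[OF h(3), of \<alpha>] step(3) by simp
  qed
  obtain a where "a \<in> A" using Ane by blast
  hence "(\<eta>0, a) \<in> (moves L N)\<^sup>*" using irred[OF \<eta>0(1) _ L] AE by blast
  hence "D a = M" by (rule reach)
  thus False using DA \<open>a \<in> A\<close> Mpos by simp
qed

definition harmonic_ok where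
  "harmonic_ok L \<alpha> N A B F \<longleftrightarrow>
      (\<forall>\<eta>. \<eta> \<notin> config_space L N \<longrightarrow> F \<eta> = 0) \<and>
      (\<forall>\<eta>\<in>A. F \<eta> = 1) \<and> (\<forall>\<eta>\<in>B. F \<eta> = 0) \<and>
      (\<forall>\<eta>\<in>config_space L N - (A \<union> B). generator L \<alpha> F \<eta> = 0)"

lemma uniq:
  assumes L: "L \<ge> 1" and AE: "A \<subseteq> config_space L N" and Ane: "A \<noteq> {}"
    and F1: "harmonic_ok L \<alpha> N A B F1" and F2: "harmonic_ok L \<alpha> N A B F2"
  shows "F1 = F2"
proof
  fix \<eta>
  let ?E = "config_space L N"
  have h: "(\<Sum>x<L. zrp_g \<alpha> (\<eta> x) * (D (sigma x (next_site L x) \<eta>) - D \<eta>)) = 0"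
    if "\<eta> \<in> ?E - (A \<union> B)" "D = (\<lambda>\<zeta>. c * (F1 \<zeta> - F2 \<zeta>))" for \<eta> D c
  proof -
    have "generator L \<alpha> F1 \<eta> = 0" "generator L \<alpha> F2 \<eta> = 0"
      using F1 F2 that(1) unfolding harmonic_ok_def by auto
    hence "c * (generator L \<alpha> F1 \<eta> - generator L \<alpha> F2 \<eta>) = 0" by simp
    thus ?thesis unfolding generator_def that(2)
      by (simp add: sum_subtractf[symmetric] sum_distrib_left algebra_simps)
  qed
  show "F1 \<eta> = F2 \<eta>"
  proof (cases "\<eta> \<in> ?E")
    case True
    have "(\<lambda>\<zeta>. 1 * (F1 \<zeta> - F2 \<zeta>)) \<eta> \<le> 0"
    proof (rule max_principle[OF L AE Ane _ _ _ True, where B=B and \<alpha>=\<alpha>])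
      show "\<forall>\<eta>\<in>A. 1 * (F1 \<eta> - F2 \<eta>) = 0" using F1 F2 by (simp add: harmonic_ok_def)
      show "\<forall>\<eta>\<in>B. 1 * (F1 \<eta> - F2 \<eta>) = 0" using F1 F2 by (simp add: harmonic_ok_def)
      show "\<forall>\<eta>\<in>?E - (A \<union> B). (\<Sum>x<L. zrp_g \<alpha> (\<eta> x) * (1 * (F1 (sigma x (next_site L x) \<eta>) - F2 (sigma x (next_site L x) \<eta>)) - 1 * (F1 \<eta> - F2 \<eta>))) = 0"
        using h[OF _ refl, of _ 1] by blast
    qed
    moreover have "(\<lambda>\<zeta>. (-1) * (F1 \<zeta> - F2 \<zeta>)) \<eta> \<le> 0"
    proof (rule max_principle[OF L AE Ane _ _ _ True, where B=B and \<alpha>=\<alpha>])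
      show "\<forall>\<eta>\<in>A. (-1) * (F1 \<eta> - F2 \<eta>) = 0" using F1 F2 by (simp add: harmonic_ok_def)
      show "\<forall>\<eta>\<in>B. (-1) * (F1 \<eta> - F2 \<eta>) = 0" using F1 F2 by (simp add: harmonic_ok_def)
      show "\<forall>\<eta>\<in>?E - (A \<union> B). (\<Sum>x<L. zrp_g \<alpha> (\<eta> x) * ((-1) * (F1 (sigma x (next_site L x) \<eta>) - F2 (sigma x (next_site L x) \<eta>)) - (-1) * (F1 \<eta> - F2 \<eta>))) = 0"
        using h[OF _ refl, of _ "-1"] by blast
    qed
    ultimately show ?thesis by simp
  next
    case False thus ?thesis using F1 F2 by (simp add: harmonic_ok_def)
  qed
qed


definition lam :: "nat \<Rightarrow> real \<Rightarrow> (nat \<Rightarrow> nat) \<Rightarrow> real" where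
  "lam L \<alpha> \<eta> = (\<Sum>x<L. zrp_g \<alpha> (\<eta> x))"

definition Tm where
  "Tm L \<alpha> N A B F \<eta> = (if \<eta> \<notin> config_space L N then 0 else if \<eta> \<in> A then 1 else if \<eta> \<in> B then 0
      else (\<Sum>x<L. zrp_g \<alpha> (\<eta> x) * F (sigma x (next_site L x) \<eta>)) / lam L \<alpha> \<eta>)"

lemma lam_nonneg: "lam L \<alpha> \<eta> \<ge> 0"
  unfolding lam_def by (intro sum_nonneg) (simp add: g_nonneg)

lemma lam_pos:
  assumes "\<eta> \<in> config_space L N" "N \<ge> 1"
  shows "lam L \<alpha> \<eta> > 0"
proof -
  have "\<exists>x<L. \<eta> x \<ge> 1"
  proof (rule ccontr)
    assume "\<not> ?thesis"
    hence "\<forall>x\<in>{..<L}. \<eta> x = 0" by force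
    hence "(\<Sum>x<L. \<eta> x) = 0" by simp
    thus False using assms by (simp add: config_space_def)
  qed
  then obtain x where x: "x < L" "\<eta> x \<ge> 1" by blast
  have "zrp_g \<alpha> (\<eta> x) \<le> lam L \<alpha> \<eta>"
    unfolding lam_def using x by (intro member_le_sum) (auto simp: g_nonneg)
  thus ?thesis using g_pos[OF x(2), of \<alpha>] by simp
qed

lemma Tm_mono:
  assumes "\<And>\<zeta>. F \<zeta> \<le> G \<zeta>"
  shows "Tm L \<alpha> N A B F \<eta> \<le> Tm L \<alpha> N A B G \<eta>"
proof -
  have "(\<Sum>x<L. zrp_g \<alpha> (\<eta> x) * F (sigma x (next_site L x) \<eta>))
      \<le> (\<Sum>x<L. zrp_g \<alpha> (\<eta> x) * G (sigma x (next_site L x) \<eta>))"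
    by (intro sum_mono mult_left_mono assms g_nonneg)
  thus ?thesis unfolding Tm_def using lam_nonneg[of L \<alpha> \<eta>] by (simp add: divide_right_mono)
qed

lemma Tm_le1:
  assumes "\<And>\<zeta>. F \<zeta> \<le> 1"
  shows "Tm L \<alpha> N A B F \<eta> \<le> 1"
proof -
  have "(\<Sum>x<L. zrp_g \<alpha> (\<eta> x) * F (sigma x (next_site L x) \<eta>)) \<le> (\<Sum>x<L. zrp_g \<alpha> (\<eta> x) * 1)"
    by (intro sum_mono mult_left_mono assms g_nonneg)
  hence "(\<Sum>x<L. zrp_g \<alpha> (\<eta> x) * F (sigma x (next_site L x) \<eta>)) \<le> lam L \<alpha> \<eta>"
    by (simp add: lam_def)
  thus ?thesis unfolding Tm_def using lam_nonneg[of L \<alpha> \<eta>]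
    by (auto simp: divide_le_eq_1)
qed

lemma Tm_nonneg:
  assumes "\<And>\<zeta>. F \<zeta> \<ge> 0"
  shows "Tm L \<alpha> N A B F \<eta> \<ge> 0"
  unfolding Tm_def using lam_nonneg[of L \<alpha> \<eta>]
  by (auto intro!: divide_nonneg_nonneg sum_nonneg mult_nonneg_nonneg g_nonneg assms)

lemma existence:
  assumes L: "L \<ge> 1" and N: "N \<ge> 1" and AE: "A \<subseteq> config_space L N" and AB: "A \<inter> B = {}"
  shows "\<exists>V. harmonic_ok L \<alpha> N A B V"
proof -
  let ?T = "Tm L \<alpha> N A B"
  let ?E = "config_space L N"
  define V0 :: "(nat \<Rightarrow> nat) \<Rightarrow> real" where "V0 = (\<lambda>\<eta>. if \<eta> \<in> A then 1 else 0)"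
  define W where "W n = (?T ^^ n) V0" for n
  have W0: "W 0 \<eta> \<le> W (Suc 0) \<eta>" for \<eta>
  proof -
    have "0 \<le> ?T V0 \<eta>" by (rule Tm_nonneg) (simp add: V0_def)
    thus ?thesis using AE AB unfolding W_def V0_def by (auto simp: Tm_def)
  qed
  have inc: "W n \<eta> \<le> W (Suc n) \<eta>" for n \<eta>
  proof (induction n arbitrary: \<eta>)
    case 0 thus ?case by (rule W0)
  next
    case (Suc n) thus ?case unfolding W_def by (simp add: Tm_mono)
  qed
  have le1: "W n \<eta> \<le> 1" for n \<eta>
  proof (induction n arbitrary: \<eta>)
    case 0 thus ?case by (simp add: W_def V0_def)
  next
    case (Suc n) thus ?case unfolding W_def by (simp add: Tm_le1)
  qed
  define V where "V \<eta> = (SUP n. W n \<eta>)" for \<eta>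
  have conv: "(\<lambda>n. W n \<eta>) \<longlonglongrightarrow> V \<eta>" for \<eta>
    unfolding V_def
    by (rule LIMSEQ_incseq_SUP) (auto simp: bdd_above_def incseq_Suc_iff inc intro!: exI[of _ 1] le1)
  have fix_pt: "?T V \<eta> = V \<eta>" for \<eta>
  proof -
    have "(\<lambda>n. ?T (W n) \<eta>) \<longlonglongrightarrow> ?T V \<eta>"
    proof (cases "\<eta> \<in> ?E - (A \<union> B)")
      case True
      have "(\<lambda>n. (\<Sum>x<L. zrp_g \<alpha> (\<eta> x) * W n (sigma x (next_site L x) \<eta>)) / lam L \<alpha> \<eta>)
          \<longlonglongrightarrow> (\<Sum>x<L. zrp_g \<alpha> (\<eta> x) * V (sigma x (next_site L x) \<eta>)) / lam L \<alpha> \<eta>"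
        using lam_pos[of \<eta> L N \<alpha>] True N
        by (intro tendsto_divide tendsto_sum tendsto_mult tendsto_const conv) auto
      thus ?thesis using True unfolding Tm_def by simp
    next
      case False thus ?thesis unfolding Tm_def by auto
    qed
    moreover have "(\<lambda>n. ?T (W n) \<eta>) = (\<lambda>n. W (Suc n) \<eta>)" by (simp add: W_def)
    ultimately have "(\<lambda>n. W (Suc n) \<eta>) \<longlonglongrightarrow> ?T V \<eta>" by simp
    moreover have "(\<lambda>n. W (Suc n) \<eta>) \<longlonglongrightarrow> V \<eta>" using conv by (rule LIMSEQ_Suc)
    ultimately show ?thesis by (rule LIMSEQ_unique)
  qed
  have "harmonic_ok L \<alpha> N A B V"
    unfolding harmonic_ok_def
  proof (intro conjI allI ballI impI)
    fix \<eta> assume "\<eta> \<notin> ?E" thus "V \<eta> = 0" using fix_pt[of \<eta>] by (simp add: Tm_def)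
  next
    fix \<eta> assume "\<eta> \<in> A" thus "V \<eta> = 1" using fix_pt[of \<eta>] AE by (auto simp: Tm_def)
  next
    fix \<eta> assume "\<eta> \<in> B"
    moreover hence "\<eta> \<notin> A" using AB by blast
    ultimately show "V \<eta> = 0" using fix_pt[of \<eta>] by (simp add: Tm_def split: if_splits)
  next
    fix \<eta> assume h: "\<eta> \<in> ?E - (A \<union> B)"
    have lp: "lam L \<alpha> \<eta> > 0" using lam_pos[of \<eta> L N \<alpha>] h N by auto
    have "V \<eta> = (\<Sum>x<L. zrp_g \<alpha> (\<eta> x) * V (sigma x (next_site L x) \<eta>)) / lam L \<alpha> \<eta>"
      using fix_pt[of \<eta>] h by (simp add: Tm_def)
    hence "V \<eta> * lam L \<alpha> \<eta> = (\<Sum>x<L. zrp_g \<alpha> (\<eta> x) * V (sigma x (next_site L x) \<eta>))"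
      using lp by (simp add: field_simps)
    thus "generator L \<alpha> V \<eta> = 0"
      unfolding generator_def lam_def
      by (simp add: right_diff_distrib sum_subtractf sum_distrib_left mult.commute)
  qed
  thus ?thesis by blast
qed

lemma eq_pot:
  assumes L: "L \<ge> 1" and N: "N \<ge> 1" and AE: "A \<subseteq> config_space L N" and AB: "A \<inter> B = {}"
    and Ane: "A \<noteq> {}"
  shows "harmonic_ok L \<alpha> N A B (eq_potential L \<alpha> N A B)"
proof -
  obtain V where V: "harmonic_ok L \<alpha> N A B V" using existence[OF L N AE AB] by blast
  have "eq_potential L \<alpha> N A B = V"
    unfolding eq_potential_def harmonic_ok_def[symmetric]
    by (rule the1_equality) (use V uniq[OF L AE Ane] in blast)+
  thus ?thesis using V by simp
qed


lemma sum_sq_le: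
  fixes f :: "nat \<Rightarrow> real"
  shows "(\<Sum>k\<in>S. f k)^2 \<le> real (card S) * (\<Sum>k\<in>S. (f k)^2)"
proof -
  have "(\<Sum>k\<in>S. f k)^2 = (\<Sum>j\<in>S. \<Sum>k\<in>S. f j * f k)"
    by (simp add: power2_eq_square sum_product)
  also have "\<dots> \<le> (\<Sum>j\<in>S. \<Sum>k\<in>S. ((f j)^2 + (f k)^2) / 2)"
  proof (intro sum_mono)
    fix j k
    have "0 \<le> (f j - f k)^2" by simp
    thus "f j * f k \<le> ((f j)^2 + (f k)^2) / 2" by (simp add: power2_eq_square algebra_simps)
  qed
  also have "\<dots> = (\<Sum>j\<in>S. (real (card S) * (f j)^2 + (\<Sum>k\<in>S. (f k)^2)) / 2)"
    by (simp add: sum_divide_distrib[symmetric] sum.distrib)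
  also have "\<dots> = real (card S) * (\<Sum>k\<in>S. (f k)^2)"
    by (simp add: sum_divide_distrib[symmetric] sum.distrib sum_distrib_left[symmetric] sum_distrib_right[symmetric])
  finally show ?thesis .
qed

lemma prod_two:
  fixes f :: "nat \<Rightarrow> real"
  assumes "finite S" "x \<in> S" "y \<in> S" "x \<noteq> y"
  shows "prod f S = f x * f y * prod f (S - {x, y})"
proof -
  have "prod f S = f x * prod f (S - {x})" using assms by (simp add: prod.remove)
  also have "prod f (S - {x}) = f y * prod f (S - {x} - {y})"
    using assms by (intro prod.remove) auto
  finally show ?thesis by (simp add: Diff_insert2[symmetric] insert_commute mult.assoc)
qed

definition cc :: "nat \<Rightarrow> real \<Rightarrow> nat \<Rightarrow> (nat \<Rightarrow> nat) \<times> nat \<Rightarrow> real" where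
  "cc L \<alpha> N e = mu L \<alpha> N (fst e) * zrp_g \<alpha> (fst e (snd e))"

definition TT :: "nat \<Rightarrow> (nat \<Rightarrow> nat) \<times> nat \<Rightarrow> (nat \<Rightarrow> nat) \<times> nat" where
  "TT L e = (sigma (snd e) (next_site L (snd e)) (fst e), next_site L (snd e))"

definition grad :: "nat \<Rightarrow> ((nat \<Rightarrow> nat) \<Rightarrow> real) \<Rightarrow> (nat \<Rightarrow> nat) \<times> nat \<Rightarrow> real" where
  "grad L G e = G (fst (TT L e)) - G (fst e)"

definition PP :: "nat \<Rightarrow> nat \<Rightarrow> ((nat \<Rightarrow> nat) \<times> nat) set" where
  "PP L N = {e \<in> config_space L N \<times> {..<L}. fst e (snd e) \<ge> 1}"

lemma weight_nonneg: "weight L \<alpha> \<eta> \<ge> 0"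
  unfolding weight_def using a_pos by (intro prod_nonneg) (simp add: less_imp_le)

lemma mu_nonneg: "mu L \<alpha> N \<eta> \<ge> 0"
  unfolding mu_def partition_fn_def using weight_nonneg
  by (intro divide_nonneg_nonneg sum_nonneg) auto

lemma cc_nonneg: "cc L \<alpha> N e \<ge> 0"
  unfolding cc_def using mu_nonneg g_nonneg by (intro mult_nonneg_nonneg)

lemma cc_zero: "fst e (snd e) = 0 \<Longrightarrow> cc L \<alpha> N e = 0"
  by (simp add: cc_def g_zero)

lemma sum_EX:
  fixes f :: "(nat \<Rightarrow> nat) \<Rightarrow> nat \<Rightarrow> real"
  shows "(\<Sum>x<L. \<Sum>\<eta>\<in>E. f \<eta> x) = (\<Sum>e\<in>E \<times> {..<L}. f (fst e) (snd e))"
proof -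
  have "(\<Sum>x<L. \<Sum>\<eta>\<in>E. f \<eta> x) = (\<Sum>\<eta>\<in>E. \<Sum>x<L. f \<eta> x)" by (rule sum.swap)
  also have "\<dots> = (\<Sum>(\<eta>, x)\<in>E \<times> {..<L}. f \<eta> x)" by (rule sum.cartesian_product)
  also have "\<dots> = (\<Sum>e\<in>E \<times> {..<L}. f (fst e) (snd e))" by (simp add: case_prod_beta)
  finally show ?thesis .
qed

lemma dir_eq:
  "dirichlet L \<alpha> N G = 1/2 * (\<Sum>e\<in>config_space L N \<times> {..<L}. cc L \<alpha> N e * (grad L G e)^2)"
  unfolding dirichlet_def sum_EX cc_def grad_def TT_def by simp

lemma dir_nonneg: "dirichlet L \<alpha> N G \<ge> 0"
  unfolding dir_eq by (intro mult_nonneg_nonneg sum_nonneg) (auto simp: cc_nonneg)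


lemma next_ne: "L \<ge> 2 \<Longrightarrow> x < L \<Longrightarrow> next_site L x \<noteq> x"
proof (cases "Suc x < L")
  case True thus ?thesis by (simp add: next_site_def)
next
  case False
  assume "L \<ge> 2" "x < L"
  hence "Suc x = L" using False by simp
  hence "next_site L x = 0" by (simp add: next_site_def)
  thus ?thesis using \<open>Suc x = L\<close> \<open>L \<ge> 2\<close> by simp
qed

lemma weight_move:
  assumes L: "L \<ge> 2" and x: "x < L" and y: "y < L" and xy: "x \<noteq> y" and h: "\<eta> x \<ge> 1"
  shows "weight L \<alpha> (sigma x y \<eta>) * zrp_g \<alpha> (sigma x y \<eta> y) = weight L \<alpha> \<eta> * zrp_g \<alpha> (\<eta> x)"
proof -
  let ?\<xi> = "sigma x y \<eta>"
  let ?S = "{..<L} - {x, y}"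
  let ?a = "zrp_a \<alpha>"
  have xi_x: "?\<xi> x = \<eta> x - 1" and xi_y: "?\<xi> y = \<eta> y + 1"
    using xy by (auto simp: sigma_def)
  have xi_o: "?\<xi> z = \<eta> z" if "z \<in> ?S" for z using that by (auto simp: sigma_def)
  have R: "(\<Prod>z\<in>?S. 1 / ?a (?\<xi> z)) = (\<Prod>z\<in>?S. 1 / ?a (\<eta> z))"
    by (rule prod.cong) (auto simp: xi_o)
  have w1: "weight L \<alpha> ?\<xi> = 1 / ?a (\<eta> x - 1) * (1 / ?a (\<eta> y + 1)) * (\<Prod>z\<in>?S. 1 / ?a (\<eta> z))"
    unfolding weight_def using x y xy by (subst prod_two[of _ x y]) (auto simp: xi_x xi_y R)
  have w2: "weight L \<alpha> \<eta> = 1 / ?a (\<eta> x) * (1 / ?a (\<eta> y)) * (\<Prod>z\<in>?S. 1 / ?a (\<eta> z))"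
    unfolding weight_def using x y xy by (subst prod_two[of _ x y]) auto
  have g1: "zrp_g \<alpha> (?\<xi> y) = ?a (\<eta> y + 1) / ?a (\<eta> y)" by (simp add: xi_y zrp_g_def)
  have g2: "zrp_g \<alpha> (\<eta> x) = ?a (\<eta> x) / ?a (\<eta> x - 1)" using h by (simp add: zrp_g_def)
  show ?thesis unfolding w1 w2 g1 g2
    using a_pos[of \<alpha> "\<eta> x"] a_pos[of \<alpha> "\<eta> y"] a_pos[of \<alpha> "\<eta> x - 1"] a_pos[of \<alpha> "\<eta> y + 1"]
    by (simp add: field_simps)
qed

lemma cc_TT:
  assumes L: "L \<ge> 2" and e: "e \<in> PP L N"
  shows "cc L \<alpha> N (TT L e) = cc L \<alpha> N e"
proof -
  obtain \<eta> x where ex: "e = (\<eta>, x)" "x < L" "\<eta> x \<ge> 1" using e by (cases e) (auto simp: PP_def)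
  have nl: "next_site L x < L" using ex L by (simp add: next_lt)
  have ne: "x \<noteq> next_site L x" using next_ne[OF L ex(2)] by simp
  show ?thesis using weight_move[of L x "next_site L x" \<eta> \<alpha>, OF L ex(2) nl ne ex(3)] ex(1)
    unfolding cc_def TT_def mu_def by (simp add: divide_simps)
qed

definition prev :: "nat \<Rightarrow> nat \<Rightarrow> nat" where "prev L y = (y + (L - 1)) mod L"

lemma prev_next: "x < L \<Longrightarrow> prev L (next_site L x) = x"
proof -
  assume x: "x < L"
  have "prev L (next_site L x) = ((Suc x) mod L + (L - 1)) mod L" by (simp add: prev_def next_site_def)
  also have "\<dots> = (Suc x + (L - 1)) mod L" by (rule mod_add_left_eq)
  also have "Suc x + (L - 1) = x + L" using x by simp
  finally show ?thesis using x by simp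
qed

lemma next_prev: "y < L \<Longrightarrow> next_site L (prev L y) = y"
proof -
  assume y: "y < L"
  have "next_site L (prev L y) = (y + (L - 1) + 1) mod L"
    unfolding prev_def next_site_def by (simp add: mod_Suc_eq)
  also have "y + (L - 1) + 1 = y + L" using y by simp
  finally show ?thesis using y by simp
qed

lemma TT_bij:
  assumes L: "L \<ge> 2"
  shows "bij_betw (TT L) (PP L N) (PP L N)"
proof (rule bij_betw_byWitness[where f' = "\<lambda>e. (sigma (snd e) (prev L (snd e)) (fst e), prev L (snd e))"])
  have Lp: "L > 0" using L by simp
  have prev_lt: "prev L y < L" for y using Lp by (simp add: prev_def)
  show "\<forall>a\<in>PP L N. (sigma (snd (TT L a)) (prev L (snd (TT L a))) (fst (TT L a)), prev L (snd (TT L a))) = a"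
  proof
    fix a assume "a \<in> PP L N"
    then obtain \<eta> x where a: "a = (\<eta>, x)" "x < L" "\<eta> x \<ge> 1" by (cases a) (auto simp: PP_def)
    show "(sigma (snd (TT L a)) (prev L (snd (TT L a))) (fst (TT L a)), prev L (snd (TT L a))) = a"
      using a prev_next[OF a(2)] sigma_comp[of \<eta> x, OF a(3)] sigma_self[of \<eta> x, OF a(3)] by (simp add: TT_def)
  qed
  show "\<forall>a\<in>PP L N. TT L (sigma (snd a) (prev L (snd a)) (fst a), prev L (snd a)) = a"
  proof
    fix a assume "a \<in> PP L N"
    then obtain \<eta> x where a: "a = (\<eta>, x)" "x < L" "\<eta> x \<ge> 1" by (cases a) (auto simp: PP_def)
    show "TT L (sigma (snd a) (prev L (snd a)) (fst a), prev L (snd a)) = a"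
      using a next_prev[OF a(2)] sigma_comp[of \<eta> x, OF a(3)] sigma_self[of \<eta> x, OF a(3)] by (simp add: TT_def)
  qed
  show "TT L ` PP L N \<subseteq> PP L N"
  proof
    fix b assume "b \<in> TT L ` PP L N"
    then obtain a where "a \<in> PP L N" "b = TT L a" by blast
    then obtain \<eta> x where a: "b = TT L (\<eta>, x)" "x < L" "\<eta> x \<ge> 1" "\<eta> \<in> config_space L N"
      by (cases a) (auto simp: PP_def)
    show "b \<in> PP L N"
      using a sigma_in[OF a(4) a(2) next_lt[OF Lp] a(3)] sigma_pos[of \<eta> x, OF a(3)] next_lt[OF Lp]
      by (simp add: TT_def PP_def)
  qed
  show "(\<lambda>e. (sigma (snd e) (prev L (snd e)) (fst e), prev L (snd e))) ` PP L N \<subseteq> PP L N"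
  proof
    fix b assume "b \<in> (\<lambda>e. (sigma (snd e) (prev L (snd e)) (fst e), prev L (snd e))) ` PP L N"
    then obtain a where "a \<in> PP L N" "b = (\<lambda>e. (sigma (snd e) (prev L (snd e)) (fst e), prev L (snd e))) a" by blast
    then obtain \<eta> x where a: "b = (sigma x (prev L x) \<eta>, prev L x)" "x < L" "\<eta> x \<ge> 1" "\<eta> \<in> config_space L N"
      by (cases a) (auto simp: PP_def)
    show "b \<in> PP L N"
      using a sigma_in[OF a(4) a(2) prev_lt a(3)] sigma_pos[of \<eta> x, OF a(3)] prev_lt
      by (simp add: PP_def)
  qed
qed

lemma invariance:
  assumes L: "L \<ge> 2"
  shows "(\<Sum>e\<in>config_space L N \<times> {..<L}. cc L \<alpha> N e * \<psi> (TT L e))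
       = (\<Sum>e\<in>config_space L N \<times> {..<L}. cc L \<alpha> N e * \<psi> e)"
proof -
  let ?EX = "config_space L N \<times> {..<L}"
  have fin: "finite ?EX" using finite_E by simp
  have sub: "PP L N \<subseteq> ?EX" by (auto simp: PP_def)
  have cz: "cc L \<alpha> N e = 0" if "e \<in> ?EX - PP L N" for e
  proof -
    have "\<not> 1 \<le> fst e (snd e)" using that by (auto simp: PP_def)
    hence "fst e (snd e) = 0" by simp
    thus ?thesis by (rule cc_zero)
  qed
  have z: "\<forall>e\<in>?EX - PP L N. cc L \<alpha> N e * \<phi> e = 0" for \<phi> :: "_ \<Rightarrow> real"
    using cz by simp
  have "(\<Sum>e\<in>?EX. cc L \<alpha> N e * \<psi> (TT L e)) = (\<Sum>e\<in>PP L N. cc L \<alpha> N e * \<psi> (TT L e))"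
    by (rule sum.mono_neutral_right[OF fin sub]) (use z[of "\<lambda>e. \<psi> (TT L e)"] in simp)
  also have "\<dots> = (\<Sum>e\<in>PP L N. cc L \<alpha> N (TT L e) * \<psi> (TT L e))"
    using cc_TT[OF L] by (intro sum.cong) auto
  also have "\<dots> = (\<Sum>e\<in>PP L N. cc L \<alpha> N e * \<psi> e)"
    by (rule sum.reindex_bij_betw[OF TT_bij[OF L], of "\<lambda>e. cc L \<alpha> N e * \<psi> e"])
  also have "\<dots> = (\<Sum>e\<in>?EX. cc L \<alpha> N e * \<psi> e)"
    by (rule sum.mono_neutral_right[OF fin sub, symmetric]) (use z[of \<psi>] in simp)
  finally show ?thesis .
qed

lemma invariance_k:
  assumes L: "L \<ge> 2"
  shows "(\<Sum>e\<in>config_space L N \<times> {..<L}. cc L \<alpha> N e * \<psi> ((TT L ^^ k) e))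
       = (\<Sum>e\<in>config_space L N \<times> {..<L}. cc L \<alpha> N e * \<psi> e)"
proof (induction k arbitrary: \<psi>)
  case 0 thus ?case by simp
next
  case (Suc k)
  have "(\<Sum>e\<in>config_space L N \<times> {..<L}. cc L \<alpha> N e * \<psi> ((TT L ^^ Suc k) e))
     = (\<Sum>e\<in>config_space L N \<times> {..<L}. cc L \<alpha> N e * (\<lambda>e. \<psi> ((TT L ^^ k) e)) (TT L e))"
    by (simp add: funpow_swap1)
  also have "\<dots> = (\<Sum>e\<in>config_space L N \<times> {..<L}. cc L \<alpha> N e * \<psi> ((TT L ^^ k) e))"
    by (rule invariance[OF L])
  finally show ?case using Suc.IH by simp
qed

lemma TT_k:
  assumes "x < L" "\<eta> x \<ge> 1"
  shows "(TT L ^^ k) (\<eta>, x) = (sigma x ((x + k) mod L) \<eta>, (x + k) mod L)"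
proof (induction k)
  case 0 thus ?case using assms sigma_self[of \<eta> x, OF assms(2)] by simp
next
  case (Suc k)
  thus ?case using sigma_comp[of \<eta> x, OF assms(2)] by (simp add: TT_def next_mod)
qed

lemma TT_L:
  assumes "x < L" "\<eta> x \<ge> 1"
  shows "(TT L ^^ L) (\<eta>, x) = (\<eta>, x)"
  using TT_k[of x L \<eta>, OF assms, of L] assms sigma_self[of \<eta> x, OF assms(2)] by simp


definition QQ where
  "QQ L \<alpha> N G F = (\<Sum>e\<in>config_space L N \<times> {..<L}. cc L \<alpha> N e * grad L G e * F (fst e))"

lemma dir_Q:
  assumes L: "L \<ge> 2"
  shows "dirichlet L \<alpha> N G = - QQ L \<alpha> N G G"
proof -
  let ?EX = "config_space L N \<times> {..<L}"
  have inv: "(\<Sum>e\<in>?EX. cc L \<alpha> N e * (\<lambda>e. (G (fst e))^2) (TT L e)) = (\<Sum>e\<in>?EX. cc L \<alpha> N e * (\<lambda>e. (G (fst e))^2) e)"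
    by (rule invariance[OF L])
  have "(\<Sum>e\<in>?EX. cc L \<alpha> N e * (grad L G e)^2)
      = (\<Sum>e\<in>?EX. cc L \<alpha> N e * (G (fst (TT L e)))^2 - cc L \<alpha> N e * (G (fst e))^2
           - 2 * (cc L \<alpha> N e * grad L G e * G (fst e)))"
    by (rule sum.cong) (simp_all add: grad_def power2_eq_square algebra_simps)
  also have "\<dots> = (\<Sum>e\<in>?EX. cc L \<alpha> N e * (G (fst (TT L e)))^2) - (\<Sum>e\<in>?EX. cc L \<alpha> N e * (G (fst e))^2)
           - 2 * QQ L \<alpha> N G G"
    by (simp add: QQ_def sum_subtractf sum_distrib_left)
  also have "\<dots> = - 2 * QQ L \<alpha> N G G" using inv by simp
  finally show ?thesis unfolding dir_eq by simp
qed

lemma QQ_gen: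
  "QQ L \<alpha> N G F = (\<Sum>\<eta>\<in>config_space L N. mu L \<alpha> N \<eta> * generator L \<alpha> G \<eta> * F \<eta>)"
proof -
  let ?f = "\<lambda>\<eta> x. mu L \<alpha> N \<eta> * zrp_g \<alpha> (\<eta> x) * (G (sigma x (next_site L x) \<eta>) - G \<eta>) * F \<eta>"
  have "QQ L \<alpha> N G F = (\<Sum>e\<in>config_space L N \<times> {..<L}. ?f (fst e) (snd e))"
    unfolding QQ_def cc_def grad_def TT_def by simp
  also have "\<dots> = (\<Sum>x<L. \<Sum>\<eta>\<in>config_space L N. ?f \<eta> x)" by (rule sum_EX[symmetric])
  also have "\<dots> = (\<Sum>\<eta>\<in>config_space L N. \<Sum>x<L. ?f \<eta> x)" by (rule sum.swap)
  also have "\<dots> = (\<Sum>\<eta>\<in>config_space L N. mu L \<alpha> N \<eta> * generator L \<alpha> G \<eta> * F \<eta>)"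
    unfolding generator_def by (simp add: sum_distrib_left sum_distrib_right mult.assoc)
  finally show ?thesis .
qed

lemma QQ_harm:
  assumes V: "harmonic_ok L \<alpha> N A B V" and FA: "\<forall>\<eta>\<in>A. F \<eta> = 1" and FB: "\<forall>\<eta>\<in>B. F \<eta> = 0"
  shows "QQ L \<alpha> N V F = QQ L \<alpha> N V V"
  unfolding QQ_gen
proof (rule sum.cong)
  fix \<eta> assume h: "\<eta> \<in> config_space L N"
  show "mu L \<alpha> N \<eta> * generator L \<alpha> V \<eta> * F \<eta> = mu L \<alpha> N \<eta> * generator L \<alpha> V \<eta> * V \<eta>"
  proof (cases "\<eta> \<in> A \<union> B")
    case True thus ?thesis using V FA FB by (auto simp: harmonic_ok_def)
  next
    case False thus ?thesis using V h by (simp add: harmonic_ok_def)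
  qed
qed simp


lemma cyc_bound:
  fixes a b :: "nat \<Rightarrow> real" and L :: nat
  assumes Lp: "L > 0" and bd: "\<And>k. k < L \<Longrightarrow> \<bar>d k\<bar> \<le> (\<Sum>j<L. \<bar>b j\<bar>)"
  shows "\<bar>\<Sum>k<L. a k * d k\<bar> \<le> (\<Sum>k<L. (a k)^2) / 4 + (real L)^2 * (\<Sum>k<L. (b k)^2)"
proof -
  define Aa where "Aa = (\<Sum>k<L. \<bar>a k\<bar>)"
  define Bb where "Bb = (\<Sum>k<L. \<bar>b k\<bar>)"
  have "\<bar>\<Sum>k<L. a k * d k\<bar> \<le> (\<Sum>k<L. \<bar>a k * d k\<bar>)" by (rule sum_abs)
  also have "\<dots> \<le> (\<Sum>k<L. \<bar>a k\<bar> * Bb)"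
    using bd unfolding Bb_def by (intro sum_mono) (auto simp: abs_mult intro: mult_left_mono)
  also have "\<dots> = Aa * Bb" by (simp add: Aa_def sum_distrib_right)
  also have "\<dots> \<le> Aa^2 / (4 * real L) + real L * Bb^2"
  proof -
    have "0 \<le> (Aa - 2 * real L * Bb)^2" by simp
    hence "4 * real L * (Aa * Bb) \<le> Aa^2 + 4 * (real L)^2 * Bb^2"
      by (simp add: power2_eq_square algebra_simps)
    thus ?thesis using Lp by (simp add: field_simps power2_eq_square)
  qed
  also have "\<dots> \<le> (real L * (\<Sum>k<L. (a k)^2)) / (4 * real L) + real L * (real L * (\<Sum>k<L. (b k)^2))"
  proof -
    have "Aa^2 \<le> real L * (\<Sum>k<L. \<bar>a k\<bar>^2)" unfolding Aa_def using sum_sq_le[of "\<lambda>k. \<bar>a k\<bar>" "{..<L}"] by simp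
    moreover have "Bb^2 \<le> real L * (\<Sum>k<L. \<bar>b k\<bar>^2)" unfolding Bb_def using sum_sq_le[of "\<lambda>k. \<bar>b k\<bar>" "{..<L}"] by simp
    ultimately show ?thesis using Lp
      by (intro add_mono divide_right_mono mult_left_mono) auto
  qed
  also have "\<dots> = (\<Sum>k<L. (a k)^2) / 4 + (real L)^2 * (\<Sum>k<L. (b k)^2)"
    using Lp by (simp add: power2_eq_square)
  finally show ?thesis .
qed

lemma sector:
  assumes L: "L \<ge> 2"
  shows "\<bar>QQ L \<alpha> N G F\<bar> \<le> dirichlet L \<alpha> N G / 2 + 2 * (real L)^2 * dirichlet L \<alpha> N F"
proof -
  let ?EX = "config_space L N \<times> {..<L}"
  let ?c = "cc L \<alpha> N"
  define v where "v e k = fst ((TT L ^^ k) e)" for e k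
  define a where "a e k = grad L G ((TT L ^^ k) e)" for e k
  define b where "b e k = grad L F ((TT L ^^ k) e)" for e k
  have Lp: "L > 0" using L by simp
  have av: "a e k = G (v e (Suc k)) - G (v e k)" for e k unfolding a_def v_def grad_def by simp
  have bv: "b e k = F (v e (Suc k)) - F (v e k)" for e k unfolding b_def v_def grad_def by simp
  have v0: "v e 0 = fst e" for e by (simp add: v_def)
  have "(\<Sum>k<L. QQ L \<alpha> N G F) = (\<Sum>k<L. \<Sum>e\<in>?EX. ?c e * (\<lambda>e. grad L G e * F (fst e)) ((TT L ^^ k) e))"
  proof (rule sum.cong[OF refl])
    fix k
    show "QQ L \<alpha> N G F = (\<Sum>e\<in>?EX. ?c e * (\<lambda>e. grad L G e * F (fst e)) ((TT L ^^ k) e))"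
      unfolding QQ_def using invariance_k[OF L, of \<alpha> N "\<lambda>e. grad L G e * F (fst e)" k]
      by (simp add: mult.assoc)
  qed
  also have "\<dots> = (\<Sum>e\<in>?EX. ?c e * (\<Sum>k<L. a e k * F (v e k)))"
    by (subst sum.swap) (simp add: sum_distrib_left a_def v_def)
  finally have i: "real L * QQ L \<alpha> N G F = (\<Sum>e\<in>?EX. ?c e * (\<Sum>k<L. a e k * F (v e k)))" by simp
  have ii: "?c e * (\<Sum>k<L. a e k * F (v e k)) = ?c e * (\<Sum>k<L. a e k * (F (v e k) - F (v e 0)))"
    if e: "e \<in> ?EX" for e
  proof (cases "?c e = 0")
    case False
    obtain \<eta> x where ex: "e = (\<eta>, x)" "x < L" using e by (cases e) auto
    have "\<eta> x \<noteq> 0" using False cc_zero[of e] ex by auto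
    hence h1: "\<eta> x \<ge> 1" by simp
    have "(\<Sum>k<L. a e k) = G (v e L) - G (v e 0)" unfolding av by (rule sum_lessThan_telescope)
    also have "v e L = v e 0" using TT_L[of x L \<eta>, OF ex(2) h1] ex by (simp add: v_def)
    finally have "(\<Sum>k<L. a e k) = 0" by simp
    hence "(\<Sum>k<L. a e k * (F (v e k) - F (v e 0))) = (\<Sum>k<L. a e k * F (v e k))"
      by (simp add: right_diff_distrib sum_subtractf sum_distrib_right[symmetric])
    thus ?thesis by simp
  qed simp
  have iii: "\<bar>\<Sum>k<L. a e k * (F (v e k) - F (v e 0))\<bar> \<le> (\<Sum>k<L. (a e k)^2) / 4 + (real L)^2 * (\<Sum>k<L. (b e k)^2)" for e
  proof (rule cyc_bound[OF Lp])
    fix k assume k: "k < L"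
    have "F (v e k) - F (v e 0) = (\<Sum>j<k. b e j)" unfolding bv by (rule sum_lessThan_telescope[symmetric])
    hence "\<bar>F (v e k) - F (v e 0)\<bar> \<le> (\<Sum>j<k. \<bar>b e j\<bar>)" by (simp add: sum_abs)
    also have "\<dots> \<le> (\<Sum>j<L. \<bar>b e j\<bar>)" using k by (intro sum_mono2) auto
    finally show "\<bar>F (v e k) - F (v e 0)\<bar> \<le> (\<Sum>j<L. \<bar>b e j\<bar>)" .
  qed
  have "real L * \<bar>QQ L \<alpha> N G F\<bar> = \<bar>\<Sum>e\<in>?EX. ?c e * (\<Sum>k<L. a e k * (F (v e k) - F (v e 0)))\<bar>"
  proof -
    have "real L * QQ L \<alpha> N G F = (\<Sum>e\<in>?EX. ?c e * (\<Sum>k<L. a e k * (F (v e k) - F (v e 0))))"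
      unfolding i by (rule sum.cong[OF refl ii])
    moreover have "real L * \<bar>QQ L \<alpha> N G F\<bar> = \<bar>real L * QQ L \<alpha> N G F\<bar>" by (simp add: abs_mult)
    ultimately show ?thesis by simp
  qed
  also have "\<dots> \<le> (\<Sum>e\<in>?EX. ?c e * \<bar>\<Sum>k<L. a e k * (F (v e k) - F (v e 0))\<bar>)"
    by (rule order_trans[OF sum_abs]) (simp add: abs_mult cc_nonneg)
  also have "\<dots> \<le> (\<Sum>e\<in>?EX. ?c e * ((\<Sum>k<L. (a e k)^2) / 4 + (real L)^2 * (\<Sum>k<L. (b e k)^2)))"
    by (intro sum_mono mult_left_mono iii cc_nonneg)
  also have "\<dots> = (\<Sum>k<L. \<Sum>e\<in>?EX. ?c e * (a e k)^2) / 4 + (real L)^2 * (\<Sum>k<L. \<Sum>e\<in>?EX. ?c e * (b e k)^2)"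
    by (simp add: distrib_left sum.distrib sum_distrib_left sum_divide_distrib[symmetric] mult.assoc
        mult.left_commute[of "(real L)^2"] sum.swap[of _ "{..<L}"])
  also have "(\<Sum>k<L. \<Sum>e\<in>?EX. ?c e * (a e k)^2) = real L * (2 * dirichlet L \<alpha> N G)"
  proof -
    have "(\<Sum>e\<in>?EX. ?c e * (a e k)^2) = 2 * dirichlet L \<alpha> N G" for k
      unfolding a_def dir_eq using invariance_k[OF L, of \<alpha> N "\<lambda>e. (grad L G e)^2" k] by simp
    thus ?thesis by simp
  qed
  also have "(\<Sum>k<L. \<Sum>e\<in>?EX. ?c e * (b e k)^2) = real L * (2 * dirichlet L \<alpha> N F)"
  proof -
    have "(\<Sum>e\<in>?EX. ?c e * (b e k)^2) = 2 * dirichlet L \<alpha> N F" for k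
      unfolding b_def dir_eq using invariance_k[OF L, of \<alpha> N "\<lambda>e. (grad L F e)^2" k] by simp
    thus ?thesis by simp
  qed
  finally have "real L * \<bar>QQ L \<alpha> N G F\<bar> \<le> real L * (dirichlet L \<alpha> N G / 2 + 2 * (real L)^2 * dirichlet L \<alpha> N F)"
    by (simp add: algebra_simps power2_eq_square)
  thus ?thesis using Lp by simp
qed

theorem lemma3p2:
  fixes L N :: nat and \<alpha> :: real and A B :: "(nat \<Rightarrow> nat) set"
  assumes "L \<ge> 2" and "\<alpha> > 0" and "N \<ge> 1"
    and "A \<subseteq> config_space L N" and "B \<subseteq> config_space L N"
    and "A \<noteq> {}" and "B \<noteq> {}" and "A \<inter> B = {}"
  shows "sym_capacity L \<alpha> N A B \<le> capacity L \<alpha> N A B \<and>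
         capacity L \<alpha> N A B \<le> 4 * real L ^ 2 * sym_capacity L \<alpha> N A B"
proof -
  let ?V = "eq_potential L \<alpha> N A B"
  let ?S = "{dirichlet L \<alpha> N F | F. (\<forall>\<eta>\<in>A. F \<eta> = 1) \<and> (\<forall>\<eta>\<in>B. F \<eta> = 0)}"
  have L1: "L \<ge> 1" using assms(1) by simp
  have V: "harmonic_ok L \<alpha> N A B ?V" by (rule eq_pot[OF L1 assms(3) assms(4) assms(8) assms(6)])
  have VS: "dirichlet L \<alpha> N ?V \<in> ?S" using V unfolding harmonic_ok_def by blast
  have bdd: "bdd_below ?S" unfolding bdd_below_def using dir_nonneg by blast
  have sc: "sym_capacity L \<alpha> N A B = Inf ?S" by (simp add: sym_capacity_def)
  have cap: "capacity L \<alpha> N A B = dirichlet L \<alpha> N ?V" by (simp add: capacity_def)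
  have part1: "sym_capacity L \<alpha> N A B \<le> capacity L \<alpha> N A B"
    unfolding sc cap by (rule cInf_lower[OF VS bdd])
  have Lpos: "real L > 0" using assms(1) by simp
  have key: "dirichlet L \<alpha> N ?V / (4 * real L ^ 2) \<le> d" if dS: "d \<in> ?S" for d
  proof -
    obtain F where F: "d = dirichlet L \<alpha> N F" "\<forall>\<eta>\<in>A. F \<eta> = 1" "\<forall>\<eta>\<in>B. F \<eta> = 0"
      using dS by blast
    have "dirichlet L \<alpha> N ?V = - QQ L \<alpha> N ?V ?V" by (rule dir_Q[OF assms(1)])
    also have "\<dots> = - QQ L \<alpha> N ?V F" using QQ_harm[OF V F(2,3)] by simp
    also have "\<dots> \<le> \<bar>QQ L \<alpha> N ?V F\<bar>" by simp
    also have "\<dots> \<le> dirichlet L \<alpha> N ?V / 2 + 2 * (real L)^2 * dirichlet L \<alpha> N F"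
      by (rule sector[OF assms(1)])
    finally have "dirichlet L \<alpha> N ?V \<le> 4 * real L ^ 2 * d" using F(1) by simp
    thus ?thesis using Lpos by (simp add: divide_le_eq mult.commute)
  qed
  have "dirichlet L \<alpha> N ?V / (4 * real L ^ 2) \<le> Inf ?S"
    using VS key by (intro cInf_greatest) auto
  hence part2: "capacity L \<alpha> N A B \<le> 4 * real L ^ 2 * sym_capacity L \<alpha> N A B"
    unfolding sc cap using Lpos by (simp add: divide_le_eq mult.commute)
  show ?thesis using part1 part2 by simp
qed

end
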